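(* Let $L>0$, $a,b\in C^1([-L,L])$ with $a,b>0$, and $G\in C^{1,1}_{\rm loc}(\mathbb{R})$ (not necessarily even), and set $f:=-G'$. Assume there exists $x_0\in[-L,L]$ such that $$(ab)'\le 0\ \text{in }(-L,x_0]\quad\text{and}\quad (ab)'\ge 0\ \text{in }[x_0,L).$$ Let $m>0$. Then every solution $u$ of $$-(a u')'=b f(u)\ \text{ in }(-L,L),\qquad u(L)=-u(-L)=m$$ is increasing, provided either (i) $G\ge G(-m)=G(m)$ in $\mathbb{R}$; or (ii) for some $M\in(0,m]$, $G\ge G(-M)=G(M)$ in $[-M,M]$, $G'\le 0$ in $(-\infty,-M)$, and $G'\ge 0$ in $(M,+\infty)$.
   Context: A solution is a function $u\in H^1((-L,L))$ satisfying the equation weakly (hence classically, $u\in C^2((-L,L))$) together with the boundary conditions. *)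

theory Defs
  imports "HOL-Analysis.Analysis"
begin

definition C11_loc :: "(real \<Rightarrow> real) \<Rightarrow> (real \<Rightarrow> real) \<Rightarrow> bool" where
  "C11_loc G g \<longleftrightarrow> (\<forall>x. (G has_real_derivative g x) (at x)) \<and>
     (\<forall>K. compact K \<longrightarrow> (\<exists>C. C-lipschitz_on K g))"

definition C1_closed :: "real \<Rightarrow> (real \<Rightarrow> real) \<Rightarrow> (real \<Rightarrow> real) \<Rightarrow> bool" where
  "C1_closed L h h' \<longleftrightarrow> (\<forall>x\<in>{-L..L}. (h has_real_derivative h' x) (at x within {-L..L}))
     \<and> continuous_on {-L..L} h'"

end

theory Submission
  imports Defs
begin

lemma H_deriv_aux:
  fixes L m x0 c :: real and a a' b b' G g u u' :: "real \<Rightarrow> real"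
  assumes L: "L > 0"
    and a_C1: "C1_closed L a a'" and b_C1: "C1_closed L b b'"
    and G_reg: "C11_loc G g"
    and u_deriv: "\<forall>x\<in>{-L<..<L}. (u has_real_derivative u' x) (at x)"
    and u_eq: "\<forall>x\<in>{-L<..<L}.
                 ((\<lambda>t. a t * u' t) has_real_derivative (- (b x * (- g (u x))))) (at x)"
    and x: "x \<in> {-L<..<L}"
  shows "((\<lambda>t. (a t * u' t)^2/2 - a t * b t * (G (u t) - c)) has_real_derivative
          (- ((a' x * b x + a x * b' x) * (G (u x) - c)))) (at x)"
proof -
  have xi: "x \<in> interior {-L..L}" using x by simp
  have da: "(a has_real_derivative a' x) (at x)"
    proof -
    have "(a has_real_derivative a' x) (at x within {-L..L})" using a_C1 x unfolding C1_closed_def by auto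
    then show ?thesis using at_within_interior[OF xi] by simp
  qed
  have db: "(b has_real_derivative b' x) (at x)"
    proof -
    have "(b has_real_derivative b' x) (at x within {-L..L})" using b_C1 x unfolding C1_closed_def by auto
    then show ?thesis using at_within_interior[OF xi] by simp
  qed
  have dw: "((\<lambda>t. a t * u' t) has_real_derivative (b x * g (u x))) (at x)"
    using u_eq x by simp
  have dG: "((\<lambda>t. G (u t)) has_real_derivative (g (u x) * u' x)) (at x)"
    using DERIV_chain2[where f=G and g=u] G_reg u_deriv x unfolding C11_loc_def by auto
  have d1: "DERIV (\<lambda>t. (a t*u' t)*(a t*u' t)) x :> (b x*g(u x))*(a x*u' x) + (b x*g(u x))*(a x*u' x)"
    using DERIV_mult[OF dw dw] .
  have d2: "DERIV (\<lambda>t. a t*b t) x :> a' x * b x + b' x * a x"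
    using DERIV_mult[OF da db] .
  have d3: "DERIV (\<lambda>t. G(u t) - c) x :> g(u x)*u' x - 0"
    using DERIV_diff[OF dG DERIV_const] .
  have D: "DERIV (\<lambda>t. (a t*u' t)*(a t*u' t)/2 - (a t*b t)*(G(u t) - c)) x :>
     ((b x*g(u x))*(a x*u' x) + (b x*g(u x))*(a x*u' x))/2 - ((a' x * b x + b' x * a x) * (G(u x) - c) + (g(u x)*u' x - 0)*(a x*b x))"
    using DERIV_diff[OF DERIV_cdivide[OF d1, of 2] DERIV_mult[OF d2 d3]] .
  have D2: "DERIV (\<lambda>t. (a t*u' t)*(a t*u' t)/2 - (a t*b t)*(G(u t) - c)) x :>
      (- ((a' x * b x + a x * b' x) * (G (u x) - c)))"
    by (rule DERIV_cong[OF D]) (simp add: algebra_simps)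
  then show ?thesis by (simp add: power2_eq_square)
qed

lemma uniq:
  fixes L x1 y :: real and a a' b b' G g u u' :: "real \<Rightarrow> real"
  assumes L: "L > 0"
    and a_C1: "C1_closed L a a'" and b_C1: "C1_closed L b b'"
    and a_pos: "\<forall>x\<in>{-L..L}. a x > 0" and b_pos: "\<forall>x\<in>{-L..L}. b x > 0"
    and G_reg: "C11_loc G g"
    and u_cont: "continuous_on {-L..L} u"
    and u_deriv: "\<forall>x\<in>{-L<..<L}. (u has_real_derivative u' x) (at x)"
    and u_eq: "\<forall>x\<in>{-L<..<L}.
                 ((\<lambda>t. a t * u' t) has_real_derivative (- (b x * (- g (u x))))) (at x)"
    and x1: "x1 \<in> {-L<..<L}" and u0: "u' x1 = 0" and g0: "g (u x1) = 0"
    and y: "y \<in> {-L<..<L}"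
  shows "u y = u x1"
proof -
  define p where "p = u x1"
  have acont: "continuous_on {-L..L} a"
    by (rule DERIV_continuous_on[where D=a']) (use a_C1 in \<open>auto simp: C1_closed_def\<close>)
  have bcont: "continuous_on {-L..L} b"
    by (rule DERIV_continuous_on[where D=b']) (use b_C1 in \<open>auto simp: C1_closed_def\<close>)
  obtain xm where xm: "xm \<in> {-L..L}" "\<forall>z\<in>{-L..L}. a xm \<le> a z"
    using continuous_attains_inf[OF compact_Icc _ acont] L by auto
  define A0 where "A0 = a xm"
  have A0: "A0 > 0" using a_pos xm unfolding A0_def by auto
  obtain xM where xM: "xM \<in> {-L..L}" "\<forall>z\<in>{-L..L}. b z \<le> b xM"
    using continuous_attains_sup[OF compact_Icc _ bcont] L by auto
  define B where "B = b xM"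
  have B: "B > 0" using b_pos xM unfolding B_def by auto
  have cu: "compact (u ` {-L..L})" by (rule compact_continuous_image[OF u_cont compact_Icc])
  obtain K where K: "K-lipschitz_on (u ` {-L..L}) g"
    using G_reg cu unfolding C11_loc_def by blast
  have K0: "K \<ge> 0" using lipschitz_on_nonneg[OF K] .
  define C where "C = 1/A0 + B*K"
  have C0: "C \<ge> 0" using A0 B K0 unfolding C_def by simp
  define w where "w = (\<lambda>t. a t * u' t)"
  define E where "E = (\<lambda>t. (u t - p)*(u t - p) + w t * w t)"
  define E' where "E' = (\<lambda>t. 2*((u t - p) * u' t) + 2*(w t * (b t * g (u t))))"
  have dE: "DERIV E s :> E' s" if s: "s \<in> {-L<..<L}" for s
  proof -
    have du: "DERIV (\<lambda>t. u t - p) s :> u' s - 0"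
      using DERIV_diff[OF _ DERIV_const] u_deriv s by blast
    have dw: "DERIV w s :> b s * g (u s)" using u_eq s unfolding w_def by simp
    have "DERIV E s :> (u' s - 0) * (u s - p) + (u' s - 0) * (u s - p) + ((b s * g (u s)) * w s + (b s * g (u s)) * w s)"
      unfolding E_def by (rule DERIV_add[OF DERIV_mult[OF du du] DERIV_mult[OF dw dw]])
    then show ?thesis by (rule DERIV_cong) (simp add: E'_def algebra_simps)
  qed
  have Ebound: "\<bar>E' s\<bar> \<le> C * E s" if s: "s \<in> {-L<..<L}" for s
  proof -
    define v where "v = u s - p"
    define ww where "ww = w s"
    have sI: "s \<in> {-L..L}" using s by auto
    have as: "a s \<ge> A0" "a s > 0" using xm a_pos sI unfolding A0_def by auto
    have bs: "b s \<le> B" "b s > 0" using xM b_pos sI unfolding B_def by auto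
    have up: "u' s = ww / a s" using as unfolding ww_def w_def by simp
    have gl: "\<bar>g (u s)\<bar> \<le> K * (abs v)"
    proof -
      have "dist (g (u s)) (g (u x1)) \<le> K * dist (u s) (u x1)"
        by (rule lipschitz_onD[OF K]) (use sI x1 in auto)
      then show ?thesis using g0 by (simp add: dist_real_def v_def p_def)
    qed
    have sq: "2 * (abs v) * (abs ww) \<le> v * v + ww * ww"
    proof -
      have "0 \<le> ((abs v) - (abs ww))^2" by simp
      then show ?thesis by (simp add: power2_eq_square algebra_simps abs_mult_self_eq)
    qed
    have t1: "\<bar>2*(v * u' s)\<bar> \<le> (1/A0) * (v * v + ww * ww)"
    proof -
      have "\<bar>2*(v * u' s)\<bar> = (2 * (abs v) * (abs ww)) / a s" using as by (simp add: up abs_mult)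
      also have "\<dots> \<le> (v * v + ww * ww) / a s" using sq as by (simp add: divide_right_mono)
      also have "\<dots> \<le> (v * v + ww * ww) / A0"
        using as A0 by (intro divide_left_mono) (auto intro: add_nonneg_nonneg)
      finally show ?thesis by simp
    qed
    have t2: "\<bar>2*(ww * (b s * g (u s)))\<bar> \<le> (B*K) * (v * v + ww * ww)"
    proof -
      have "\<bar>2*(ww * (b s * g (u s)))\<bar> = b s * ((abs ww) * (2 * \<bar>g (u s)\<bar>))" using bs by (simp add: abs_mult)
      also have "\<dots> \<le> B * ((abs ww) * (2 * (K * (abs v))))"
        using bs gl K0 by (intro mult_mono) (auto intro: mult_left_mono)
      also have "\<dots> = (B*K) * (2 * (abs v) * (abs ww))" by (simp add: algebra_simps)
      also have "\<dots> \<le> (B*K) * (v * v + ww * ww)" using sq B K0 by (intro mult_left_mono) auto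
      finally show ?thesis .
    qed
    have "\<bar>E' s\<bar> \<le> \<bar>2*(v * u' s)\<bar> + \<bar>2*(ww * (b s * g (u s)))\<bar>"
      unfolding E'_def v_def ww_def by (rule abs_triangle_ineq)
    also have "\<dots> \<le> (1/A0) * (v * v + ww * ww) + (B*K) * (v * v + ww * ww)" using t1 t2 by simp
    also have "\<dots> = C * E s" unfolding C_def E_def v_def ww_def by (simp add: algebra_simps)
    finally show ?thesis .
  qed
  have Ex1: "E x1 = 0" unfolding E_def w_def p_def using u0 by simp
  have Enn: "E t \<ge> 0" for t unfolding E_def by simp
  have "E y \<le> 0"
  proof (cases "x1 \<le> y")
    case True
    define F where "F = (\<lambda>t. E t * exp (- C * t))"
    have dF: "DERIV F t :> E' t * exp (- C * t) + (exp (- C * t) * (- C * 1)) * E t" if "t \<in> {-L<..<L}" for t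
      unfolding F_def
      by (intro DERIV_mult[OF dE[OF that]] DERIV_chain2[OF DERIV_exp] DERIV_cmult DERIV_ident)
    have "F x1 \<ge> F y"
    proof (rule DERIV_nonpos_imp_decreasing_open[OF True])
      fix t assume t: "x1 < t" "t < y"
      then have tI: "t \<in> {-L<..<L}" using x1 y by auto
      have "E' t \<le> C * E t" using Ebound[OF tI] by simp
      then have "E' t * exp (- C * t) + (exp (- C * t) * (- C * 1)) * E t \<le> 0"
        by (simp add: algebra_simps mult_right_mono)
      then show "\<exists>y. DERIV F t :> y \<and> y \<le> 0" using dF[OF tI] by blast
    next
      show "continuous_on {x1..y} F"
        using x1 y by (intro continuous_at_imp_continuous_on ballI DERIV_isCont[OF dF]) auto
    qed
    then show ?thesis using Ex1 unfolding F_def by (simp add: mult_le_0_iff)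
  next
    case False
    then have le: "y \<le> x1" by simp
    define F where "F = (\<lambda>t. E t * exp (C * t))"
    have dF: "DERIV F t :> E' t * exp (C * t) + (exp (C * t) * (C * 1)) * E t" if "t \<in> {-L<..<L}" for t
      unfolding F_def
      by (intro DERIV_mult[OF dE[OF that]] DERIV_chain2[OF DERIV_exp] DERIV_cmult DERIV_ident)
    have "F y \<le> F x1"
    proof (rule DERIV_nonneg_imp_increasing_open[OF le])
      fix t assume t: "y < t" "t < x1"
      then have tI: "t \<in> {-L<..<L}" using x1 y by auto
      have "- E' t \<le> C * E t" using Ebound[OF tI] by simp
      then have "0 \<le> (E' t + C * E t) * exp (C * t)" by simp
      then have "0 \<le> E' t * exp (C * t) + (exp (C * t) * (C * 1)) * E t"
        by (simp add: algebra_simps)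
      then show "\<exists>y. DERIV F t :> y \<and> 0 \<le> y" using dF[OF tI] by blast
    next
      show "continuous_on {y..x1} F"
        using x1 y by (intro continuous_at_imp_continuous_on ballI DERIV_isCont[OF dF]) auto
    qed
    then show ?thesis using Ex1 unfolding F_def by (simp add: mult_le_0_iff)
  qed
  then have "E y = 0" using Enn[of y] by simp
  then have "(u y - p)*(u y - p) = 0" unfolding E_def
    using zero_le_square[of "u y - p"] zero_le_square[of "w y"] by linarith
  then show ?thesis unfolding p_def by simp
qed

theorem theorem1p9:
  fixes L m x0 :: real and a a' b b' G g u u' :: "real \<Rightarrow> real"
  assumes L: "L > 0"
    and a_C1: "C1_closed L a a'" and b_C1: "C1_closed L b b'"
    and a_pos: "\<forall>x\<in>{-L..L}. a x > 0" and b_pos: "\<forall>x\<in>{-L..L}. b x > 0"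
    and G_reg: "C11_loc G g"
    and x0: "x0 \<in> {-L..L}"
    and ab_left: "\<forall>x\<in>{-L<..x0}. a' x * b x + a x * b' x \<le> 0"
    and ab_right: "\<forall>x\<in>{x0..<L}. a' x * b x + a x * b' x \<ge> 0"
    and m: "m > 0"
    and u_cont: "continuous_on {-L..L} u"
    and u_deriv: "\<forall>x\<in>{-L<..<L}. (u has_real_derivative u' x) (at x)"
    and u_eq: "\<forall>x\<in>{-L<..<L}.
                 ((\<lambda>t. a t * u' t) has_real_derivative (- (b x * (- g (u x))))) (at x)"
    and bc: "u L = m" "u (-L) = - m"
    and G_cond: "((\<forall>s. G s \<ge> G m) \<and> G (-m) = G m) \<or>
       (\<exists>M. 0 < M \<and> M \<le> m \<and> G (-M) = G M \<and> (\<forall>s\<in>{-M..M}. G s \<ge> G M)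
            \<and> (\<forall>s. s < -M \<longrightarrow> g s \<le> 0) \<and> (\<forall>s. s > M \<longrightarrow> g s \<ge> 0))"
  shows "strict_mono_on {-L..L} u"
proof -
  have Gd: "\<And>x. DERIV G x :> g x" using G_reg unfolding C11_loc_def by blast
  have Gc: "\<And>S. continuous_on S G"
    by (intro continuous_at_imp_continuous_on ballI DERIV_isCont[OF Gd])
  have acont: "continuous_on {-L..L} a"
    by (rule DERIV_continuous_on[where D=a']) (use a_C1 in \<open>auto simp: C1_closed_def\<close>)
  have bcont: "continuous_on {-L..L} b"
    by (rule DERIV_continuous_on[where D=b']) (use b_C1 in \<open>auto simp: C1_closed_def\<close>)
  obtain c M where cM: "0 < M" "M \<le> m" "\<forall>s. c \<le> G s" "G (-M) = c" "G M = c"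
    and alt: "M = m \<or> ((\<forall>s. s < -M \<longrightarrow> g s \<le> 0) \<and> (\<forall>s. s > M \<longrightarrow> g s \<ge> 0))"
  proof (cases "(\<forall>s. G s \<ge> G m) \<and> G (-m) = G m")
    case True
    then show ?thesis using that[of m "G m"] m by auto
  next
    case False
    then obtain M where M: "0 < M" "M \<le> m" "G (-M) = G M" "\<forall>s\<in>{-M..M}. G s \<ge> G M"
       "\<forall>s. s < -M \<longrightarrow> g s \<le> 0" "\<forall>s. s > M \<longrightarrow> g s \<ge> 0" using G_cond by blast
    have "G s \<ge> G M" for s
    proof -
      consider "s \<in> {-M..M}" | "s > M" | "s < -M" by force
      then show ?thesis
      proof cases
        case 1 then show ?thesis using M by auto
      next
        case 2
        show ?thesis
        proof (rule DERIV_nonneg_imp_increasing_open[of M s G])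
          fix x assume "M < x" "x < s" then show "\<exists>y. DERIV G x :> y \<and> 0 \<le> y" using Gd M by blast
        qed (use 2 Gc in auto)
      next
        case 3
        have "G s \<ge> G (-M)"
        proof (rule DERIV_nonpos_imp_decreasing_open[of s "-M" G])
          fix x assume "s < x" "x < -M" then show "\<exists>y. DERIV G x :> y \<and> y \<le> 0" using Gd M by blast
        qed (use 3 Gc in auto)
        then show ?thesis using M by simp
      qed
    qed
    then show ?thesis using that[of M "G M"] M by auto
  qed
  define w where "w = (\<lambda>t. a t * u' t)"
  define H where "H = (\<lambda>t. (a t * u' t)^2/2 - a t * b t * (G (u t) - c))"
  define \<phi> where "\<phi> = (\<lambda>t. - (a t * b t * (G (u t) - c)))"
  have Hd: "DERIV H x :> - ((a' x * b x + a x * b' x) * (G (u x) - c))" if "x \<in> {-L<..<L}" for x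
    unfolding H_def by (rule H_deriv_aux[OF L a_C1 b_C1 G_reg u_deriv u_eq that])
  have wd: "DERIV w x :> b x * g (u x)" if "x \<in> {-L<..<L}" for x
    using u_eq that unfolding w_def by simp
  have Hc: "continuous_on {s..t} H" if "-L < s" "t < L" for s t
    using that by (intro continuous_at_imp_continuous_on ballI DERIV_isCont[OF Hd]) auto
  have wc: "continuous_on {s..t} w" if "-L < s" "t < L" for s t
    using that by (intro continuous_at_imp_continuous_on ballI DERIV_isCont[OF wd]) auto
  have uc: "continuous_on {s..t} u" if "-L \<le> s" "t \<le> L" for s t
    using that by (intro continuous_on_subset[OF u_cont]) auto
  have Hphi: "\<phi> t \<le> H t" for t unfolding H_def \<phi>_def by simp
  have phic: "continuous_on {-L..L} \<phi>"
    unfolding \<phi>_def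
    by (intro continuous_intros acont bcont continuous_on_compose2[OF Gc u_cont]) auto
  have Hmono_l: "H t \<le> H x" if "-L < t" "t \<le> x" "x \<le> x0" "x < L" for t x
  proof (rule DERIV_nonneg_imp_increasing_open[OF that(2)])
    fix z assume z: "t < z" "z < x"
    have zI: "z \<in> {-L<..<L}" using z that by auto
    have "a' z * b z + a z * b' z \<le> 0" using ab_left z that by auto
    moreover have "G (u z) - c \<ge> 0" using cM by auto
    ultimately have "- ((a' z * b z + a z * b' z) * (G (u z) - c)) \<ge> 0"
      by (simp add: mult_nonpos_nonneg)
    then show "\<exists>y. DERIV H z :> y \<and> y \<ge> 0" using Hd[OF zI] by blast
  qed (rule Hc, use that in auto)
  have Hmono_r: "H t \<le> H x" if "-L < x" "x \<le> t" "x0 \<le> x" "t < L" for t x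
  proof (rule DERIV_nonpos_imp_decreasing_open[OF that(2)])
    fix z assume z: "x < z" "z < t"
    have zI: "z \<in> {-L<..<L}" using z that by auto
    have "a' z * b z + a z * b' z \<ge> 0" using ab_right z that by auto
    moreover have "G (u z) - c \<ge> 0" using cM by auto
    ultimately have "- ((a' z * b z + a z * b' z) * (G (u z) - c)) \<le> 0"
      by simp
    then show "\<exists>y. DERIV H z :> y \<and> y \<le> 0" using Hd[OF zI] by blast
  qed (rule Hc, use that in auto)
  have Hleft0: "H x \<ge> 0" if x: "-L < x" "x < L" "x \<le> x0" and t: "-L \<le> t" "t \<le> x" "G (u t) = c" for x t
  proof (cases "t = -L")
    case False
    then have "H t \<le> H x" using Hmono_l[of t x] x t by auto
    moreover have "H t \<ge> 0" unfolding H_def using t by simp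
    ultimately show ?thesis by simp
  next
    case True
    have phiL: "\<phi> (-L) = 0" unfolding \<phi>_def using t True by simp
    have lim: "(\<phi> \<longlongrightarrow> \<phi> (-L)) (at_right (-L))"
      using continuous_on_Icc_at_rightD[OF phic] L by auto
    have ev: "eventually (\<lambda>z. \<phi> z \<le> H x) (at_right (-L))"
      unfolding eventually_at_right_field
    proof (intro exI[of _ x] conjI allI impI)
      fix z assume "z > -L" "z < x"
      then show "\<phi> z \<le> H x" using Hphi[of z] Hmono_l[of z x] x by force
    qed (use x in auto)
    have "\<phi> (-L) \<le> H x" by (rule tendsto_upperbound[OF lim ev]) simp
    then show ?thesis using phiL by simp
  qed
  have Hright0: "H x \<ge> 0" if x: "-L < x" "x < L" "x0 \<le> x" and t: "x \<le> t" "t \<le> L" "G (u t) = c" for x t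
  proof (cases "t = L")
    case False
    then have "H t \<le> H x" using Hmono_r[of x t] x t by auto
    moreover have "H t \<ge> 0" unfolding H_def using t by simp
    ultimately show ?thesis by simp
  next
    case True
    have phiL: "\<phi> L = 0" unfolding \<phi>_def using t True by simp
    have lim: "(\<phi> \<longlongrightarrow> \<phi> L) (at_left L)"
      using continuous_on_Icc_at_leftD[OF phic] L by auto
    have ev: "eventually (\<lambda>z. \<phi> z \<le> H x) (at_left L)"
      unfolding eventually_at_left_field
    proof (intro exI[of _ x] conjI allI impI)
      fix z assume "z < L" "z > x"
      then show "\<phi> z \<le> H x" using Hphi[of z] Hmono_r[of x z] x by force
    qed (use x in auto)
    have "\<phi> L \<le> H x" by (rule tendsto_upperbound[OF lim ev]) simp
    then show ?thesis using phiL by simp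
  qed
  have nozero: "u' x1 \<noteq> 0" if x1: "x1 \<in> {-L<..<L}" for x1
  proof
    assume u0: "u' x1 = 0"
    define p where "p = u x1"
    have x1I: "-L < x1" "x1 < L" using x1 by auto
    have w0: "w x1 = 0" unfolding w_def using u0 by simp
    have Hx1: "H x1 \<ge> 0"
    proof (cases "M = m")
      case True
      show ?thesis
      proof (cases "x1 \<le> x0")
        case True
        then show ?thesis using Hleft0[of x1 "-L"] x1I bc cM \<open>M = m\<close> by auto
      next
        case False
        then show ?thesis using Hright0[of x1 L] x1I bc cM \<open>M = m\<close> by auto
      qed
    next
      case False
      then have sg: "\<forall>s. s < -M \<longrightarrow> g s \<le> 0" "\<forall>s. s > M \<longrightarrow> g s \<ge> 0" using alt by auto
      consider "p > M" | "p < -M" | "-M \<le> p" "p \<le> M" by force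
      then show ?thesis
      proof cases
        case 1
        define S where "S = {-L..x1} \<inter> u -` {..M}"
        have Scl: "closed S" unfolding S_def by (rule continuous_closed_preimage[OF uc]) (use x1I in auto)
        have Sne: "-L \<in> S" unfolding S_def using bc cM m x1I by auto
        have Sbd: "bdd_above S" unfolding S_def by (auto intro: bdd_aboveI[of _ x1])
        define t where "t = Sup S"
        have tS: "t \<in> S" unfolding t_def using closed_contains_Sup[OF _ Sbd Scl] Sne by auto
        have tmax: "s \<le> t" if "s \<in> S" for s unfolding t_def by (rule cSup_upper[OF that Sbd])
        have tI: "-L \<le> t" "t \<le> x1" "u t \<le> M" using tS unfolding S_def by auto
        have gtM: "u s > M" if "t < s" "s \<le> x1" for s
          using tmax[of s] that tI unfolding S_def by force
        have wneg: "w s \<le> 0" if "t < s" "s \<le> x1" for s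
        proof -
          have "w s \<le> w x1"
          proof (rule DERIV_nonneg_imp_increasing_open[OF that(2)])
            fix z assume z: "s < z" "z < x1"
            have zI: "z \<in> {-L<..<L}" using z that tI x1I by auto
            have "b z > 0" using b_pos zI by auto
            moreover have "g (u z) \<ge> 0" using sg gtM[of z] z that by auto
            ultimately have "b z * g (u z) \<ge> 0" by simp
            then show "\<exists>y. DERIV w z :> y \<and> y \<ge> 0" using wd[OF zI] by blast
          qed (rule wc, use that tI x1I in auto)
          then show ?thesis using w0 by simp
        qed
        have "u x1 \<le> u t"
        proof (rule DERIV_nonpos_imp_decreasing_open[OF tI(2)])
          fix z assume z: "t < z" "z < x1"
          have zI: "z \<in> {-L<..<L}" using z tI x1I by auto
          have "u' z = w z / a z"
            proof - have "a z > 0" using a_pos zI by auto then show ?thesis unfolding w_def by simp qed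
          also have "\<dots> \<le> 0" using wneg[of z] z a_pos zI by (auto intro: divide_nonpos_pos)
          finally show "\<exists>y. DERIV u z :> y \<and> y \<le> 0" using u_deriv zI by blast
        qed (rule uc, use tI x1I in auto)
        then have False using 1 tI unfolding p_def by simp
        then show ?thesis ..
      next
        case 2
        define S where "S = {x1..L} \<inter> u -` {-M..}"
        have Scl: "closed S" unfolding S_def by (rule continuous_closed_preimage[OF uc]) (use x1I in auto)
        have Sne: "L \<in> S" unfolding S_def using bc cM m x1I by auto
        have Sbd: "bdd_below S" unfolding S_def by (auto intro: bdd_belowI[of _ x1])
        define t where "t = Inf S"
        have tS: "t \<in> S" unfolding t_def using closed_contains_Inf[OF _ Sbd Scl] Sne by auto
        have tmin: "t \<le> s" if "s \<in> S" for s unfolding t_def by (rule cInf_lower[OF that Sbd])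
        have tI: "x1 \<le> t" "t \<le> L" "u t \<ge> -M" using tS unfolding S_def by auto
        have ltM: "u s < -M" if "x1 \<le> s" "s < t" for s
          using tmin[of s] that tI unfolding S_def by force
        have wneg: "w s \<le> 0" if "x1 \<le> s" "s < t" for s
        proof -
          have "w s \<le> w x1"
          proof (rule DERIV_nonpos_imp_decreasing_open[OF that(1)])
            fix z assume z: "x1 < z" "z < s"
            have zI: "z \<in> {-L<..<L}" using z that tI x1I by auto
            have "b z > 0" using b_pos zI by auto
            moreover have "g (u z) \<le> 0" using sg ltM[of z] z that by auto
            ultimately have "b z * g (u z) \<le> 0" by (simp add: mult_nonneg_nonpos)
            then show "\<exists>y. DERIV w z :> y \<and> y \<le> 0" using wd[OF zI] by blast
          qed (rule wc, use that tI x1I in auto)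
          then show ?thesis using w0 by simp
        qed
        have "u t \<le> u x1"
        proof (rule DERIV_nonpos_imp_decreasing_open[OF tI(1)])
          fix z assume z: "x1 < z" "z < t"
          have zI: "z \<in> {-L<..<L}" using z tI x1I by auto
          have "u' z = w z / a z"
            proof - have "a z > 0" using a_pos zI by auto then show ?thesis unfolding w_def by simp qed
          also have "\<dots> \<le> 0" using wneg[of z] z a_pos zI by (auto intro: divide_nonpos_pos)
          finally show "\<exists>y. DERIV u z :> y \<and> y \<le> 0" using u_deriv zI by blast
        qed (rule uc, use tI x1I in auto)
        then have False using 2 tI unfolding p_def by simp
        then show ?thesis ..
      next
        case 3
        show ?thesis
        proof (cases "x1 \<le> x0")
          case True
          obtain t where t: "-L \<le> t" "t \<le> x1" "u t = -M"
            using IVT'[of u "-L" "-M" x1] uc[of "-L" x1] bc cM 3 x1I unfolding p_def by auto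
          then show ?thesis using Hleft0[of x1 t] x1I True cM by auto
        next
          case False
          obtain t where t: "x1 \<le> t" "t \<le> L" "u t = M"
            using IVT'[of u x1 M L] uc[of x1 L] bc cM 3 x1I unfolding p_def by auto
          then show ?thesis using Hright0[of x1 t] x1I False cM by auto
        qed
      qed
    qed
    have ab: "a x1 * b x1 > 0" using a_pos b_pos x1I by auto
    have "H x1 = - (a x1 * b x1 * (G p - c))" unfolding H_def p_def using u0 by simp
    then have "a x1 * b x1 * (G p - c) \<le> 0" using Hx1 by simp
    then have "G p - c \<le> 0" using ab mult_le_0_iff[of "a x1 * b x1" "G p - c"] by linarith
    then have Gp: "G p = c" using cM by (metis antisym diff_le_0_iff_le)
    have gp: "g p = 0"
      by (rule DERIV_local_min[OF Gd, of 1]) (use Gp cM in auto)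
    have ueq: "u y = p" if "y \<in> {-L<..<L}" for y
      unfolding p_def
      by (rule uniq[OF L a_C1 b_C1 a_pos b_pos G_reg u_cont u_deriv u_eq x1 u0 _ that])
         (use gp p_def in simp)
    have cl: "closed {x \<in> {-L..L}. u x = p}"
      by (rule continuous_closed_preimage_constant[OF u_cont]) simp
    have "{-L<..<L} \<subseteq> {x \<in> {-L..L}. u x = p}" using ueq by auto
    then have "closure {-L<..<L} \<subseteq> {x \<in> {-L..L}. u x = p}" using cl by (rule closure_minimal)
    then have "{-L..L} \<subseteq> {x \<in> {-L..L}. u x = p}" using L by simp
    then have "u L = p" "u (-L) = p" using L subsetD[of "{-L..L}" _ L] subsetD[of "{-L..L}" _ "-L"] by auto
    then show False using bc m by simp
  qed
  have u'eq: "u' z = w z / a z" if "z \<in> {-L<..<L}" for z proof - have "a z > 0" using a_pos that by auto then show ?thesis unfolding w_def by simp qed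
  have u'c: "continuous_on {s..t} u'" if "-L < s" "t < L" for s t
  proof -
    have "continuous_on {s..t} (\<lambda>z. w z / a z)"
    proof (rule continuous_on_divide)
      show "continuous_on {s..t} w" by (rule wc[OF that])
      show "continuous_on {s..t} a" by (rule continuous_on_subset[OF acont]) (use that in auto)
      show "\<forall>z\<in>{s..t}. a z \<noteq> 0"
      proof
        fix z assume "z \<in> {s..t}" then have "a z > 0" using a_pos that by auto
        then show "a z \<noteq> 0" by simp
      qed
    qed
    then show ?thesis
    proof (rule continuous_on_eq)
      fix z assume "z \<in> {s..t}" then show "w z / a z = u' z" using u'eq[of z] that by auto
    qed
  qed
  obtain l z0 where z0: "-L < z0" "z0 < L" "DERIV u z0 :> l" "u L - u (-L) = (L - -L) * l"
  proof -
    have "\<exists>l z. -L < z \<and> z < L \<and> DERIV u z :> l \<and> u L - u (-L) = (L - -L) * l"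
    proof (rule MVT)
      show "-L < L" using L by simp
      show "continuous_on {-L..L} u" by (rule u_cont)
      fix x assume "-L < x" "x < L" then show "u differentiable (at x)"
        using u_deriv real_differentiable_def by auto
    qed
    then show ?thesis using that by blast
  qed
  have l0: "u' z0 > 0"
  proof -
    have "DERIV u z0 :> u' z0" using u_deriv z0 by auto
    then have "l = u' z0" by (rule DERIV_unique[OF z0(3)])
    moreover have "l > 0" using z0(4) bc m L by (simp add: zero_less_mult_iff)
    ultimately show ?thesis by simp
  qed
  have pos: "u' z > 0" if z: "-L < z" "z < L" for z
  proof (rule ccontr)
    assume "\<not> u' z > 0"
    then have neg: "u' z \<le> 0" by simp
    consider "z \<le> z0" | "z0 \<le> z" by linarith
    then obtain y where "-L < y" "y < L" "u' y = 0"
    proof cases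
      case 1
      then obtain y where "z \<le> y" "y \<le> z0" "u' y = 0"
        using IVT'[of u' z 0 z0] u'c[of z z0] neg l0 z z0 by auto
      then show ?thesis using that[of y] z z0(1,2) by linarith
    next
      case 2
      then obtain y where "z0 \<le> y" "y \<le> z" "u' y = 0"
        using IVT2'[of u' z 0 z0] u'c[of z0 z] neg l0 z z0 by auto
      then show ?thesis using that[of y] z z0(1,2) by linarith
    qed
    then show False using nozero by auto
  qed
  show ?thesis
  proof (rule strict_mono_onI)
    fix x y assume xy: "x \<in> {-L..L}" "y \<in> {-L..L}" "x < y"
    obtain l z where z: "x < z" "z < y" "DERIV u z :> l" "u y - u x = (y - x) * l"
    proof -
      have "\<exists>l z. x < z \<and> z < y \<and> DERIV u z :> l \<and> u y - u x = (y - x) * l"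
      proof (rule MVT)
        show "x < y" using xy by simp
        show "continuous_on {x..y} u" by (rule uc) (use xy in auto)
        fix z assume "x < z" "z < y" then show "u differentiable (at z)"
          using u_deriv real_differentiable_def xy by auto
      qed
      then show ?thesis using that by blast
    qed
    have "DERIV u z :> u' z" using u_deriv z xy by auto
    then have "l = u' z" by (rule DERIV_unique[OF z(3)])
    then have "l > 0" using pos[of z] z xy by auto
    moreover have "y - x > 0" using xy by simp
    ultimately have "(y - x) * l > 0" by simp
    then show "u x < u y" using z(4) by simp
  qed
qed
end
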